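(* The morphism of operads $MagFine\to\mathrm{Prim}\,Mag$, $m^n_i\mapsto\mu^n_i$, is injective. Equivalently, for every vector space $V$, the unique $MagFine$-algebra morphism from the free $MagFine$-algebra $MagFine(V)$ to $Mag(V)$ (the latter viewed as a $MagFine$-algebra via $m^n_i\mapsto\mu^n_i$) extending the inclusion $V\subset Mag(V)$ is injective (its image consists of primitive elements).
   Context: $Mag(V)=\bigoplus_{n\ge0}\mathbb K[Y_{n-1}]\otimes V^{\otimes n}$ is the free unital magmatic algebra on $V$ ($Y_{n-1}$ = planar binary rooted trees with $n$ leaves, product by grafting on a new root), equipped with the unique coproduct $\Delta$ with $\Delta(1)=1\otimes1$, $\Delta(v)=v\otimes1+1\otimes v$ ($v\in V$), $\Delta(x\cdot y)=\Delta(x)\cdot(1\otimes y)+(x\otimes1)\cdot\Delta(y)-x\otimes y$; primitive elements are $x$ in the augmentation ideal with $\Delta(x)=x\otimes1+1\otimes x$, and $\mathrm{Prim}\,Mag$ is the operad of operations of $Mag$ whose evaluations on elements of $V$ are primitive. A $MagFine$-algebra is a vector space with multilinear operations $m^n_i$ of arity $n$, $n\ge3$, $1\le i\le n-2$, satisfying no relations; $MagFine$ is the associated free operad. In a magmatic algebra: $\omega^1(x)=x$, $\omega^n(x_1,\dots,x_n)=\omega^{n-1}(x_1,\dots,x_{n-1})\cdot x_n$; $as(x,y,z)=(x\cdot y)\cdot z-x\cdot(y\cdot z)$; $\mu^3_1=as$, $\mu^n_1(x_1,\dots,x_n)=as(x_1,\omega^{n-2}(x_2,\dots,x_{n-1}),x_n)$,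 $\mu^4_2(x_1,\dots,x_4)=as(x_1,x_2,x_3\cdot x_4)-as(x_1,x_2,x_3)\cdot x_4$, and for $2\le i\le n-2$, $\mu^n_i(x_1,\dots,x_n)=\mu^4_2(x_1,\omega^{n-i-1}(x_2,\dots,x_{n-i}),\omega^{i-1}(x_{n-i+1},\dots,x_{n-1}),x_n)$. *)

theory Defs
  imports Main
begin

text \<open>V is the vector space with basis the type 'x.  A basis of Mag(V) (augmentation
ideal) is given by planar binary rooted trees whose leaves are labelled by basis
vectors of V.  Elements of Mag(V) are represented by their coefficient functions
(finitely supported) on this basis.\<close>

datatype 'x mtree = MLeaf 'x | MNode "'x mtree" "'x mtree"

type_synonym ('x, 'k) mag = "'x mtree \<Rightarrow> 'k"

definition mgen :: "'x \<Rightarrow> ('x, 'k::field) mag" where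
  "mgen x = (\<lambda>t. if t = MLeaf x then 1 else 0)"

text \<open>The magmatic product (grafting onto a new root), extended bilinearly.\<close>
fun mmul :: "('x, 'k::field) mag \<Rightarrow> ('x, 'k) mag \<Rightarrow> ('x, 'k) mag" where
  "mmul f g (MLeaf x) = 0"
| "mmul f g (MNode a b) = f a * g b"

definition msub :: "('x, 'k::field) mag \<Rightarrow> ('x, 'k) mag \<Rightarrow> ('x, 'k) mag" where
  "msub f g = (\<lambda>t. f t - g t)"

definition mas :: "('x, 'k::field) mag \<Rightarrow> ('x, 'k) mag \<Rightarrow> ('x, 'k) mag \<Rightarrow> ('x, 'k) mag" where
  "mas x y z = msub (mmul (mmul x y) z) (mmul x (mmul y z))"

fun momega :: "('x, 'k::field) mag list \<Rightarrow> ('x, 'k) mag" where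
  "momega [] = (\<lambda>_. 0)"
| "momega (x # xs) = foldl mmul x xs"

definition mmu42 :: "('x, 'k::field) mag \<Rightarrow> ('x, 'k) mag \<Rightarrow> ('x, 'k) mag \<Rightarrow> ('x, 'k) mag \<Rightarrow> ('x, 'k) mag" where
  "mmu42 x1 x2 x3 x4 = msub (mas x1 x2 (mmul x3 x4)) (mmul (mas x1 x2 x3) x4)"

text \<open>mu^n_i(x_1,...,x_n) with n = length xs (0-based list indexing: x_k = xs ! (k-1)).\<close>
definition mmu :: "nat \<Rightarrow> ('x, 'k::field) mag list \<Rightarrow> ('x, 'k) mag" where
  "mmu i xs = (let n = length xs in
     if i = 1 then mas (xs ! 0) (momega (take (n - 2) (drop 1 xs))) (xs ! (n - 1))
     else mmu42 (xs ! 0) (momega (take (n - i - 1) (drop 1 xs)))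
                (momega (take (i - 1) (drop (n - i) xs))) (xs ! (n - 1)))"

text \<open>Basis: trees whose internal nodes are labelled by generating operations m^n_i,
where n (the arity) is the number of children, n \<ge> 3, 1 \<le> i \<le> n-2, and whose leaves
are labelled by basis vectors of V.\<close>

datatype 'x ftree = FLeaf 'x | FNode nat "'x ftree list"

fun fvalid :: "'x ftree \<Rightarrow> bool" where
  "fvalid (FLeaf x) = True"
| "fvalid (FNode i ts) = (3 \<le> length ts \<and> 1 \<le> i \<and> i \<le> length ts - 2 \<and> (\<forall>t\<in>set ts. fvalid t))"

fun feval :: "'x ftree \<Rightarrow> ('x, 'k::field) mag" where
  "feval (FLeaf x) = mgen x"
| "feval (FNode i ts) = mmu i (map feval ts)"

definition magfine_elems :: "('x ftree \<Rightarrow> 'k::field) set" where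
  "magfine_elems = {c. finite {t. c t \<noteq> 0} \<and> (\<forall>t. c t \<noteq> 0 \<longrightarrow> fvalid t)}"

definition magfine_to_mag :: "('x ftree \<Rightarrow> 'k::field) \<Rightarrow> ('x, 'k) mag" where
  "magfine_to_mag c = (\<lambda>s. \<Sum>t\<in>{t. c t \<noteq> 0}. c t * feval t s)"

end

theory Submission
  imports Defs
begin


definition lsum :: "('k::field \<times> 'b) list \<Rightarrow> ('b \<Rightarrow> 'k) \<Rightarrow> 'k" where
  "lsum X G = sum_list (map (\<lambda>(c,u). c * G u) X)"

definition lscale :: "'k::field \<Rightarrow> ('k \<times> 'b) list \<Rightarrow> ('k \<times> 'b) list" where
  "lscale a X = map (\<lambda>(d,w). (a * d, w)) X"

definition lin :: "('b \<Rightarrow> ('k::field \<times> 'c) list) \<Rightarrow> ('k \<times> 'b) list \<Rightarrow> ('k \<times> 'c) list" where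
  "lin h X = concat (map (\<lambda>(c,u). lscale c (h u)) X)"

definition eqv :: "('k::field \<times> 'b) list \<Rightarrow> ('k \<times> 'b) list \<Rightarrow> bool" where
  "eqv X Y = (\<forall>G. lsum X G = lsum Y G)"

definition coef :: "('k::field \<times> 'b) list \<Rightarrow> 'b \<Rightarrow> 'k" where
  "coef X w = lsum X (\<lambda>u. if u = w then 1 else 0)"

lemma lsum_Nil[simp]: "lsum [] G = 0" by (simp add: lsum_def)
lemma lsum_Cons[simp]: "lsum ((c,u) # X) G = c * G u + lsum X G" by (simp add: lsum_def)
lemma lsum_append[simp]: "lsum (X @ Y) G = lsum X G + lsum Y G" by (simp add: lsum_def)
lemma lsum_lscale[simp]: "lsum (lscale a X) G = a * lsum X G"
  by (induction X) (auto simp: lscale_def algebra_simps)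
lemma lsum_concat: "lsum (concat Xs) G = sum_list (map (\<lambda>X. lsum X G) Xs)"
  by (induction Xs) auto
lemma lsum_lin[simp]: "lsum (lin h X) G = lsum X (\<lambda>u. lsum (h u) G)"
  by (induction X) (auto simp: lin_def)
lemma lsum_zero[simp]: "lsum X (\<lambda>u. 0) = 0"
  by (induction X) auto
lemma lsum_cmult: "lsum X (\<lambda>u. a * G u) = a * lsum X G"
  by (induction X) (auto simp: algebra_simps)
lemma lsum_multc: "lsum X (\<lambda>u. G u * a) = lsum X G * a"
  by (induction X) (auto simp: algebra_simps)
lemma lsum_add: "lsum X (\<lambda>u. F u + G u) = lsum X F + lsum X G"
  by (induction X) (auto simp: algebra_simps)
lemma lsum_diff: "lsum X (\<lambda>u. F u - G u) = lsum X F - lsum X G"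
  by (induction X) (auto simp: algebra_simps)
lemma lsum_swap: "lsum X (\<lambda>u. lsum Y (\<lambda>v. F u v)) = lsum Y (\<lambda>v. lsum X (\<lambda>u. F u v))"
proof (induction X)
  case Nil then show ?case by simp
next
  case (Cons p X)
  obtain c u where p: "p = (c,u)" by fastforce
  show ?case using Cons by (simp add: p lsum_add lsum_cmult)
qed
lemma lsum_cong: "(\<And>u. u \<in> snd ` set X \<Longrightarrow> F u = G u) \<Longrightarrow> lsum X F = lsum X G"
  by (induction X) auto
lemma lsum_map_word: "lsum (map (\<lambda>(c,w). (c, h w)) X) G = lsum X (\<lambda>w. G (h w))"
  by (induction X) auto
lemma lscale_one[simp]: "lscale 1 X = X"
  by (induction X) (auto simp: lscale_def)
lemma lin_single[simp]: "lin h [(c,u)] = lscale c (h u)"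
  by (simp add: lin_def)
lemma lscale_single[simp]: "lscale a [(c,u)] = [(a*c,u)]"
  by (simp add: lscale_def)

lemma coef_Cons: "coef ((c,u) # X) w = (if u = w then c else 0) + coef X w"
  by (simp add: coef_def)

lemma lsum_group:
  assumes "finite U" "snd ` set X \<subseteq> U"
  shows "lsum X H = (\<Sum>T\<in>U. coef X T * H T)"
  using assms(2)
proof (induction X)
  case Nil then show ?case by (simp add: coef_def)
next
  case (Cons p X)
  obtain c u where p: "p = (c,u)" by fastforce
  have uU: "u \<in> U" using Cons.prems p by auto
  have "(\<Sum>T\<in>U. coef (p # X) T * H T) = (\<Sum>T\<in>U. (if T = u then c * H T else 0) + coef X T * H T)"
    by (rule sum.cong) (auto simp: p coef_Cons algebra_simps)
  also have "\<dots> = c * H u + (\<Sum>T\<in>U. coef X T * H T)"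
    using uU assms(1) by (simp add: sum.distrib)
  finally show ?case using Cons by (simp add: p)
qed

lemma eqv_refl[simp]: "eqv X X" by (simp add: eqv_def)
lemma eqv_trans: "eqv X Y \<Longrightarrow> eqv Y Z \<Longrightarrow> eqv X Z" by (simp add: eqv_def)
lemma eqv_sym: "eqv X Y \<Longrightarrow> eqv Y X" by (simp add: eqv_def)



definition mmulL :: "('k::field \<times> 'x mtree) list \<Rightarrow> ('k \<times> 'x mtree) list \<Rightarrow> ('k \<times> 'x mtree) list" where
  "mmulL X Y = lin (\<lambda>a. lin (\<lambda>b. [(1, MNode a b)]) Y) X"

definition subL :: "('k::field \<times> 'b) list \<Rightarrow> ('k \<times> 'b) list \<Rightarrow> ('k \<times> 'b) list" where
  "subL X Y = X @ lscale (-1) Y"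

definition evalM :: "('k::field \<times> 'x mtree) list \<Rightarrow> ('x, 'k) mag" where
  "evalM X = (\<lambda>T. coef X T)"

lemma evalM_mmulL: "evalM (mmulL X Y) = mmul (evalM X) (evalM Y)"
proof (rule ext)
  fix T :: "'a mtree"
  show "evalM (mmulL X Y) T = mmul (evalM X) (evalM Y) T"
  proof (cases T)
    case (MLeaf x)
    then show ?thesis by (simp add: evalM_def coef_def mmulL_def)
  next
    case (MNode a0 b0)
    have "evalM (mmulL X Y) T = lsum X (\<lambda>a. lsum Y (\<lambda>b. (if a = a0 then 1 else 0) * (if b = b0 then 1 else 0)))"
      by (simp add: evalM_def coef_def mmulL_def MNode) (intro lsum_cong; auto)+
    also have "\<dots> = lsum X (\<lambda>a. (if a = a0 then 1 else 0) * lsum Y (\<lambda>b. (if b = b0 then 1 else 0)))"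
      by (simp add: lsum_cmult)
    also have "\<dots> = coef X a0 * coef Y b0"
      by (simp add: lsum_multc coef_def)
    finally show ?thesis by (simp add: MNode evalM_def)
  qed
qed

lemma evalM_subL: "evalM (subL X Y) = msub (evalM X) (evalM Y)"
  by (rule ext) (simp add: evalM_def coef_def subL_def msub_def)

lemma evalM_Nil: "evalM [] = (\<lambda>_. 0)"
  by (rule ext) (simp add: evalM_def coef_def)

definition omG :: "('a \<Rightarrow> 'a \<Rightarrow> 'a) \<Rightarrow> 'a \<Rightarrow> 'a list \<Rightarrow> 'a" where
  "omG mul z ys = (case ys of [] \<Rightarrow> z | y # ys' \<Rightarrow> foldl mul y ys')"

definition asG :: "('a \<Rightarrow> 'a \<Rightarrow> 'a) \<Rightarrow> ('a \<Rightarrow> 'a \<Rightarrow> 'a) \<Rightarrow> 'a \<Rightarrow> 'a \<Rightarrow> 'a \<Rightarrow> 'a" where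
  "asG mul sub x y w = sub (mul (mul x y) w) (mul x (mul y w))"

definition mu42G :: "('a \<Rightarrow> 'a \<Rightarrow> 'a) \<Rightarrow> ('a \<Rightarrow> 'a \<Rightarrow> 'a) \<Rightarrow> 'a \<Rightarrow> 'a \<Rightarrow> 'a \<Rightarrow> 'a \<Rightarrow> 'a" where
  "mu42G mul sub x a b w = sub (asG mul sub x a (mul b w)) (mul (asG mul sub x a b) w)"

definition mmuG :: "('a \<Rightarrow> 'a \<Rightarrow> 'a) \<Rightarrow> ('a \<Rightarrow> 'a \<Rightarrow> 'a) \<Rightarrow> 'a \<Rightarrow> nat \<Rightarrow> 'a list \<Rightarrow> 'a" where
  "mmuG mul sub z i xs = (let n = length xs in
     if i = 1 then asG mul sub (xs ! 0) (omG mul z (take (n - 2) (drop 1 xs))) (xs ! (n - 1))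
     else mu42G mul sub (xs ! 0) (omG mul z (take (n - i - 1) (drop 1 xs)))
                (omG mul z (take (i - 1) (drop (n - i) xs))) (xs ! (n - 1)))"

lemma momega_omG: "momega ys = omG mmul (\<lambda>_. 0) ys"
  by (cases ys) (auto simp: omG_def)

lemma mmu_mmuG: "mmu i xs = mmuG mmul msub (\<lambda>_. 0) i xs"
  by (simp add: mmu_def mmuG_def Let_def mas_def mmu42_def asG_def mu42G_def momega_omG)

lemma foldl_rel:
  assumes mul: "\<And>a a' b b'. R a a' \<Longrightarrow> R b b' \<Longrightarrow> R (mul a b) (mul' a' b')"
  shows "list_all2 R as bs \<Longrightarrow> R a b \<Longrightarrow> R (foldl mul a as) (foldl mul' b bs)"
proof (induction as arbitrary: bs a b)
  case Nil then show ?case by simp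
next
  case (Cons x as)
  then obtain y bs' where bs: "bs = y # bs'" "R x y" "list_all2 R as bs'"
    by (cases bs) auto
  show ?case using Cons.IH[OF bs(3) mul[OF Cons.prems(2) bs(2)]] by (simp add: bs)
qed

lemma omG_rel:
  assumes mul: "\<And>a a' b b'. R a a' \<Longrightarrow> R b b' \<Longrightarrow> R (mul a b) (mul' a' b')"
    and z: "R z z'" and l: "list_all2 R as bs"
  shows "R (omG mul z as) (omG mul' z' bs)"
proof (cases as)
  case Nil then show ?thesis using l z by (simp add: omG_def)
next
  case (Cons x as')
  then obtain y bs' where bs: "bs = y # bs'" "R x y" "list_all2 R as' bs'"
    using l by (cases bs) auto
  show ?thesis using foldl_rel[of R mul mul', OF mul bs(3) bs(2)] by (simp add: omG_def Cons bs)
qed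

lemma mmuG_rel:
  assumes mul: "\<And>a a' b b'. R a a' \<Longrightarrow> R b b' \<Longrightarrow> R (mul a b) (mul' a' b')"
    and sub: "\<And>a a' b b'. R a a' \<Longrightarrow> R b b' \<Longrightarrow> R (sub a b) (sub' a' b')"
    and z: "R z z'" and l: "list_all2 R xs ys" and len: "1 \<le> length xs"
  shows "R (mmuG mul sub z i xs) (mmuG mul' sub' z' i ys)"
proof -
  have ln: "length ys = length xs" using l by (simp add: list_all2_lengthD)
  have nth: "\<And>k. k < length xs \<Longrightarrow> R (xs ! k) (ys ! k)"
    using l by (simp add: list_all2_conv_all_nth)
  have om: "\<And>m k. R (omG mul z (take m (drop k xs))) (omG mul' z' (take m (drop k ys)))"
    apply (rule omG_rel[where R=R])
      apply (erule (1) mul)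
     apply (rule z)
    by (intro list_all2_takeI list_all2_dropI l)
  have as: "\<And>a a' b b' c c'. R a a' \<Longrightarrow> R b b' \<Longrightarrow> R c c' \<Longrightarrow> R (asG mul sub a b c) (asG mul' sub' a' b' c')"
    unfolding asG_def by (intro sub mul)
  have m42: "\<And>a a' b b' c c' d d'. R a a' \<Longrightarrow> R b b' \<Longrightarrow> R c c' \<Longrightarrow> R d d' \<Longrightarrow>
      R (mu42G mul sub a b c d) (mu42G mul' sub' a' b' c' d')"
    unfolding mu42G_def by (intro sub mul as)
  have n0: "R (xs ! 0) (ys ! 0)" and n1: "R (xs ! (length xs - 1)) (ys ! (length xs - 1))"
    using nth len by (auto intro!: nth)
  show ?thesis
    unfolding mmuG_def Let_def ln using as[OF n0 om n1] m42[OF n0 om om n1] by simp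
qed



definition star :: "('x ftree list \<Rightarrow> 'x ftree list \<Rightarrow> ('k::field \<times> 'x ftree list) list)
     \<Rightarrow> 'x ftree list \<Rightarrow> 'x ftree list \<Rightarrow> ('k \<times> 'x ftree list) list" where
  "star M u v = (1, u @ v) # concat (map (\<lambda>r. concat (map (\<lambda>j.
       map (\<lambda>(c,w). (c, take r u @ w @ drop j v)) (M (drop r u) (take j v)))
       [2..<Suc (length v)])) [0..<length u])"

definition starE :: "('x ftree list \<Rightarrow> 'x ftree list \<Rightarrow> ('k::field \<times> 'x ftree list) list)
     \<Rightarrow> ('k \<times> 'x ftree list) list \<Rightarrow> ('k \<times> 'x ftree list) list \<Rightarrow> ('k \<times> 'x ftree list) list" where
  "starE M X Y = lin (\<lambda>u. lin (star M u) Y) X"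

definition Dfun :: "('x ftree list \<Rightarrow> 'x ftree list \<Rightarrow> ('k::field \<times> 'x ftree list) list)
     \<Rightarrow> 'x ftree \<Rightarrow> 'x ftree list \<Rightarrow> 'x ftree list \<Rightarrow> 'x ftree \<Rightarrow> ('k \<times> 'x ftree list) list" where
  "Dfun M x A B g = mu42G (starE M) subL [(1,[x])] [(1,A)] [(1,B)] [(1,[g])]"

primrec Mt :: "nat \<Rightarrow> 'x ftree list \<Rightarrow> 'x ftree list \<Rightarrow> ('k::field \<times> 'x ftree list) list" where
  "Mt 0 a b = (if length a = 1 \<and> 2 \<le> length b then [(-1, [FNode 1 (a @ b)])] else [])"
| "Mt (Suc n) a b = (if 2 \<le> length a \<and> 2 \<le> length b \<and> length a + length b = Suc n
      then (1, [FNode (length b) (a @ b)]) # lscale (-1) (Dfun (Mt n) (hd a) (tl a) (butlast b) (last b))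
      else Mt n a b)"

definition Mfin :: "'x ftree list \<Rightarrow> 'x ftree list \<Rightarrow> ('k::field \<times> 'x ftree list) list" where
  "Mfin a b = Mt (length a + length b) a b"

lemma lsum_concat_map: "lsum (concat (map f xs)) G = sum_list (map (\<lambda>x. lsum (f x) G) xs)"
  by (induction xs) auto

lemma lsum_star: "lsum (star M u v) G = G (u @ v) + sum_list (map (\<lambda>r. sum_list (map (\<lambda>j.
       lsum (M (drop r u) (take j v)) (\<lambda>w. G (take r u @ w @ drop j v)))
       [2..<Suc (length v)])) [0..<length u])"
  by (simp add: star_def lsum_concat_map lsum_map_word)

lemma star_right1[simp]: "star M u [g] = [(1, u @ [g])]"
  by (simp add: star_def)

lemma star_cong:
  assumes "\<And>r j. r < length u \<Longrightarrow> 2 \<le> j \<Longrightarrow> j \<le> length v \<Longrightarrow> M (drop r u) (take j v) = M' (drop r u) (take j v)"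
  shows "star M u v = star M' u v"
  unfolding star_def using assms
  by (intro arg_cong[where f="\<lambda>x. (1, u @ v) # x"] arg_cong[where f=concat] map_cong refl) auto

lemma lin_cong: "(\<And>u. u \<in> snd ` set X \<Longrightarrow> h u = h' u) \<Longrightarrow> lin h X = lin h' X"
  by (induction X) (auto simp: lin_def)

lemma starE_cong:
  assumes "\<And>u v. u \<in> snd ` set X \<Longrightarrow> v \<in> snd ` set Y \<Longrightarrow> star M u v = star M' u v"
  shows "starE M X Y = starE M' X Y"
  unfolding starE_def using assms by (intro lin_cong) auto

lemma lsum_starE: "lsum (starE M X Y) G = lsum X (\<lambda>u. lsum Y (\<lambda>v. lsum (star M u v) G))"
  by (simp add: starE_def)

lemma starE_single[simp]: "starE M [(1,u)] [(1,v)] = star M u v"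
  by (simp add: starE_def)

lemma lsum_subL[simp]: "lsum (subL X Y) G = lsum X G - lsum Y G"
  by (simp add: subL_def)

lemma Mt_small: "\<not> (2 \<le> length a \<and> 2 \<le> length b) \<Longrightarrow> Mt n a b = Mt 0 a b"
  by (induction n) auto

lemma Mt_big: "2 \<le> length a \<Longrightarrow> 2 \<le> length b \<Longrightarrow>
   Mt n a b = (if length a + length b \<le> n then Mfin a b else [])"
proof (induction n)
  case 0 then show ?case by auto
next
  case (Suc n)
  show ?case
  proof (cases "length a + length b = Suc n")
    case True then show ?thesis using Suc.prems by (simp add: Mfin_def)
  next
    case False then show ?thesis using Suc by auto
  qed
qed

lemma Mt_agree: assumes h: "length a + length b \<le> n \<or> \<not> (2 \<le> length a \<and> 2 \<le> length b)" shows "Mt n a b = Mfin a b"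
proof (cases "2 \<le> length a \<and> 2 \<le> length b")
  case True
  then show ?thesis using Mt_big[of a b n] h by auto
next
  case False
  then show ?thesis unfolding Mfin_def using Mt_small[OF False] by metis
qed

lemma Mt_zero: "2 \<le> length a \<Longrightarrow> 2 \<le> length b \<Longrightarrow> n < length a + length b \<Longrightarrow> Mt n a b = []"
  using Mt_big[of a b n] by auto

lemma Mfin_one: "2 \<le> length b \<Longrightarrow> Mfin [x] b = [(-1, [FNode 1 (x # b)])]"
  unfolding Mfin_def by (subst Mt_small) auto

lemma Mt_one: "2 \<le> length b \<Longrightarrow> Mt n [x] b = [(-1, [FNode 1 (x # b)])]"
  using Mt_small[of "[x]" b n] by simp

lemma Mfin_big: "1 \<le> length A \<Longrightarrow> 2 \<le> length b \<Longrightarrow>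
  Mfin (x # A) b = (1, [FNode (length b) (x # A @ b)]) # lscale (-1) (Dfun (Mt (length A + length b)) x A (butlast b) (last b))"
  by (simp add: Mfin_def)



lemma sum_list_upt_set: "sum_list (map f [m..<n]) = sum f {m..<n}"
  by (simp add: interv_sum_list_conv_sum_set_nat)

lemma star_diff:
  assumes v2: "2 \<le> length v" and u0: "u \<noteq> []"
    and agree: "\<And>r j. r < length u \<Longrightarrow> 2 \<le> j \<Longrightarrow> j \<le> length v \<Longrightarrow> (r \<noteq> 0 \<or> j \<noteq> length v) \<Longrightarrow>
        M (drop r u) (take j v) = M' (drop r u) (take j v)"
  shows "lsum (star M u v) G = lsum (star M' u v) G + lsum (M u v) G - lsum (M' u v) G"
proof -
  define F where "F = (\<lambda>M r j. lsum (M (drop r u) (take j v)) (\<lambda>w. G (take r u @ w @ drop j v)))"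
  have F0: "F M 0 (length v) = lsum (M u v) G" "F M' 0 (length v) = lsum (M' u v) G"
    by (simp_all add: F_def)
  have eq: "\<And>r j. r \<in> {0..<length u} \<Longrightarrow> j \<in> {2..<Suc (length v)} \<Longrightarrow>
      F M r j = F M' r j + (if r = 0 then (if j = length v then F M 0 (length v) - F M' 0 (length v) else 0) else 0)"
  proof -
    fix r j assume r: "r \<in> {0..<length u}" and j: "j \<in> {2..<Suc (length v)}"
    show "F M r j = F M' r j + (if r = 0 then (if j = length v then F M 0 (length v) - F M' 0 (length v) else 0) else 0)"
    proof (cases "r = 0 \<and> j = length v")
      case True then show ?thesis by simp
    next
      case False
      then have "M (drop r u) (take j v) = M' (drop r u) (take j v)" using agree r j by auto
      then show ?thesis using False by (auto simp: F_def)
    qed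
  qed
  have "(\<Sum>r\<in>{0..<length u}. \<Sum>j\<in>{2..<Suc (length v)}. F M r j)
      = (\<Sum>r\<in>{0..<length u}. \<Sum>j\<in>{2..<Suc (length v)}. F M' r j + (if r = 0 then (if j = length v then F M 0 (length v) - F M' 0 (length v) else 0) else 0))"
    by (intro sum.cong refl eq) auto
  also have "\<dots> = (\<Sum>r\<in>{0..<length u}. \<Sum>j\<in>{2..<Suc (length v)}. F M' r j) + (F M 0 (length v) - F M' 0 (length v))"
    using v2 u0 by (simp add: sum.distrib sum.delta' if_distrib[where f="\<lambda>x. sum x _"] cong: if_cong)
  finally have "(\<Sum>r\<in>{0..<length u}. \<Sum>j\<in>{2..<Suc (length v)}. F M r j)
     = (\<Sum>r\<in>{0..<length u}. \<Sum>j\<in>{2..<Suc (length v)}. F M' r j) + (F M 0 (length v) - F M' 0 (length v))" .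
  then show ?thesis
    unfolding lsum_star sum_list_upt_set F0[symmetric] by (simp add: F_def)
qed



lemma star_one_snoc:
  assumes "1 \<le> length A"
  shows "lsum (star M [x] (A @ [g])) G = lsum (star M [x] A) (\<lambda>u. G (u @ [g])) + lsum (M [x] (A @ [g])) G"
proof -
  let ?f = "\<lambda>j. lsum (M [x] (take j (A @ [g]))) (\<lambda>w. G (w @ drop j (A @ [g])))"
  let ?h = "\<lambda>j. lsum (M [x] (take j A)) (\<lambda>w. G (w @ drop j A @ [g]))"
  have up: "(\<Sum>j\<in>{2..<Suc (Suc (length A))}. ?f j) = (\<Sum>j\<in>{2..<Suc (length A)}. ?f j) + ?f (Suc (length A))"
    using assms by (auto simp: sum.op_ivl_Suc)
  have c: "(\<Sum>j\<in>{2..<Suc (length A)}. ?f j) = (\<Sum>j\<in>{2..<Suc (length A)}. ?h j)"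
    by (intro sum.cong refl) auto
  have l: "?f (Suc (length A)) = lsum (M [x] (A @ [g])) G" by simp
  show ?thesis
    unfolding lsum_star sum_list_upt_set using up c l by simp
qed

lemma key1:
  assumes "1 \<le> length A"
  shows "eqv (asG (starE Mfin) subL [(1,[x])] [(1,A)] [(1,[g])]) [(1::'k::field, [FNode 1 (x # A @ [g])])]"
  unfolding eqv_def
proof
  fix G :: "'a ftree list \<Rightarrow> 'k"
  have m: "Mfin [x] (A @ [g]) = [(-1::'k, [FNode 1 (x # A @ [g])])]"
    using assms by (intro Mfin_one) simp
  show "lsum (asG (starE Mfin) subL [(1, [x])] [(1, A)] [(1, [g])]) G = lsum [(1::'k, [FNode 1 (x # A @ [g])])] G"
    unfolding asG_def using star_one_snoc[OF assms, of Mfin x g G]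
    by (simp add: lsum_starE m)
qed



lemma star_one_split: "star M [x] A = (1, x # A) # tl (star M [x] A)"
  by (simp add: star_def)

lemma star_one_words:
  assumes "\<And>b. 2 \<le> length b \<Longrightarrow> M [x] b = [(-1, [FNode 1 (x # b)])]"
  shows "u \<in> snd ` set (tl (star M [x] A)) \<Longrightarrow> length u < length A"
  using assms by (auto simp: star_def)

lemma Dfun_lsum: "lsum (Dfun M x A B g) G =
   lsum (starE M (star M [x] A) [(1, B @ [g])]) G
 - lsum (starE M [(1,[x])] (star M A (B @ [g]))) G
 - lsum (starE M (subL (starE M (star M [x] A) [(1,B)]) (starE M [(1,[x])] (star M A B))) [(1,[g])]) G"
  by (simp add: Dfun_def mu42G_def asG_def)

lemma key2:
  assumes A1: "1 \<le> length A" and B1: "1 \<le> length B"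
  shows "eqv (Dfun Mfin x A B g) [(1::'k::field, [FNode (Suc (length B)) (x # A @ B @ [g])])]"
  unfolding eqv_def
proof
  fix G :: "'a ftree list \<Rightarrow> 'k"
  define k where "k = length A + length B + 1"
  define Mp :: "'a ftree list \<Rightarrow> 'a ftree list \<Rightarrow> ('k \<times> 'a ftree list) list" where "Mp = Mt k"
  have ag_small: "\<And>a b. length a + length b \<le> k \<Longrightarrow> Mfin a b = Mp a b"
    unfolding Mp_def by (simp add: Mt_agree)
  have ag_one: "\<And>y b. Mfin [y] b = Mp [y] b"
    unfolding Mp_def by (simp add: Mt_agree)
  have st_small: "\<And>u v. length u + length v \<le> k \<Longrightarrow> star Mfin u v = star Mp u v"
    by (intro star_cong ag_small) auto
  have st_one: "\<And>y v. star Mfin [y] v = star Mp [y] v"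
    by (intro star_cong) (auto simp: ag_one)
  have Mp_one: "\<And>b. 2 \<le> length b \<Longrightarrow> Mp [x] b = [(-1, [FNode 1 (x # b)])]"
    unfolding Mp_def by (rule Mt_one)
  define XA where "XA = star Mp [x] A"
  have XAf: "star Mfin [x] A = XA" by (simp add: XA_def st_one)
  have XAs: "XA = (1, x # A) # tl XA" unfolding XA_def by (rule star_one_split)
  have XAw: "\<And>u. u \<in> snd ` set (tl XA) \<Longrightarrow> length u < length A"
    unfolding XA_def by (rule star_one_words[of Mp x, OF Mp_one])
  have XAw': "\<And>u. u \<in> snd ` set XA \<Longrightarrow> length u \<le> Suc (length A)"
    using XAw XAs by (metis less_imp_le_nat le_SucI list.set_intros image_insert insertE length_Cons
       le_refl list.simps(15) snd_conv)
  have MpxA: "Mp (x # A) (B @ [g]) = []"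
    unfolding Mp_def k_def using A1 B1 by (intro Mt_zero) auto
  have d: "lsum (star Mfin (x # A) (B @ [g])) G = lsum (star Mp (x # A) (B @ [g])) G + lsum (Mfin (x # A) (B @ [g])) G"
  proof -
    have "lsum (star Mfin (x # A) (B @ [g])) G = lsum (star Mp (x # A) (B @ [g])) G + lsum (Mfin (x # A) (B @ [g])) G - lsum (Mp (x # A) (B @ [g])) G"
    proof (rule star_diff)
      show "2 \<le> length (B @ [g])" using B1 by simp
      show "x # A \<noteq> []" by simp
      fix r j assume "r < length (x # A)" "2 \<le> j" "j \<le> length (B @ [g])" "r \<noteq> 0 \<or> j \<noteq> length (B @ [g])"
      then show "Mfin (drop r (x # A)) (take j (B @ [g])) = Mp (drop r (x # A)) (take j (B @ [g]))"
        by (intro ag_small) (auto simp: k_def)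
    qed
    then show ?thesis by (simp add: MpxA)
  qed
  have T1: "lsum (starE Mfin XA [(1, B @ [g])]) G = lsum (starE Mp XA [(1, B @ [g])]) G + lsum (Mfin (x # A) (B @ [g])) G"
  proof -
    have r: "lsum (tl XA) (\<lambda>u. lsum (star Mfin u (B @ [g])) G) = lsum (tl XA) (\<lambda>u. lsum (star Mp u (B @ [g])) G)"
      by (intro lsum_cong arg_cong[where f="\<lambda>X. lsum X G"] st_small) (use XAw in \<open>fastforce simp: k_def\<close>)
    show ?thesis
      apply (simp add: lsum_starE)
      apply (subst (1 2) XAs)
      using r d by simp
  qed
  have T2: "starE Mfin [(1,[x])] (star Mfin A (B @ [g])) = starE Mp [(1,[x])] (star Mp A (B @ [g]))"
  proof -
    have "star Mfin A (B @ [g]) = star Mp A (B @ [g])" by (intro st_small) (simp add: k_def)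
    then show ?thesis by (auto intro!: starE_cong simp: st_one)
  qed
  have T3: "starE Mfin (subL (starE Mfin XA [(1,B)]) (starE Mfin [(1,[x])] (star Mfin A B))) [(1,[g])]
      = starE Mp (subL (starE Mp XA [(1,B)]) (starE Mp [(1,[x])] (star Mp A B))) [(1,[g])]"
  proof -
    have a: "starE Mfin XA [(1,B)] = starE Mp XA [(1,B)]"
      by (intro starE_cong st_small) (use XAw' in \<open>fastforce simp: k_def\<close>)
    have b: "star Mfin A B = star Mp A B" by (intro st_small) (simp add: k_def)
    have c: "starE Mfin [(1,[x])] (star Mp A B) = starE Mp [(1,[x])] (star Mp A B)"
      by (auto intro!: starE_cong simp: st_one)
    show ?thesis unfolding a b c by (intro starE_cong) simp
  qed
  have main: "lsum (Dfun Mfin x A B g) G = lsum (Dfun Mp x A B g) G + lsum (Mfin (x # A) (B @ [g])) G"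
    unfolding Dfun_lsum XAf XA_def[symmetric] T1 T2 T3 by simp
  have kk: "length A + length (B @ [g]) = k" by (simp add: k_def)
  have MF: "Mfin (x # A) (B @ [g]) = (1, [FNode (Suc (length B)) (x # A @ B @ [g])]) # lscale (-1) (Dfun Mp x A B g)"
    using Mfin_big[of A "B @ [g]" x] A1 B1 unfolding kk Mp_def by simp
  show "lsum (Dfun Mfin x A B g) G = lsum [(1::'k, [FNode (Suc (length B)) (x # A @ B @ [g])])] G"
    unfolding main MF by simp
qed



lemma foldl_single: "foldl (starE M) [(1,u)] (map (\<lambda>s. [(1::'k::field,[s])]) ws) = [(1, u @ ws)]"
  by (induction ws arbitrary: u) auto

lemma omG_single: "ws \<noteq> [] \<Longrightarrow> omG (starE M) [] (map (\<lambda>s. [(1::'k::field,[s])]) ws) = [(1, ws)]"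
  by (cases ws) (auto simp: omG_def foldl_single)

lemma split1:
  assumes "2 \<le> length ts"
  shows "ts ! 0 # take (length ts - 2) (drop 1 ts) @ [ts ! (length ts - 1)] = ts"
proof -
  obtain ys y where s: "ts = ys @ [y]" using assms by (cases ts rule: rev_cases) auto
  then obtain z zs where "ys = z # zs" using assms by (cases ys) auto
  then show ?thesis using s by (simp add: nth_append)
qed

lemma split2:
  assumes "2 \<le> i" "i + 2 \<le> length ts"
  shows "ts ! 0 # take (length ts - i - 1) (drop 1 ts) @ take (i - 1) (drop (length ts - i) ts) @ [ts ! (length ts - 1)] = ts"
proof -
  obtain x rest where ts: "ts = x # rest" using assms by (cases ts) auto
  define m where "m = length rest - i"
  have lr: "length ts - i - 1 = m" "length ts - i = Suc m" "length ts - 1 = length rest"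
    using assms by (auto simp: ts m_def)
  obtain ys y where rest: "rest = ys @ [y]" using assms ts by (cases rest rule: rev_cases) auto
  have ly: "m + (i - 1) = length ys" using assms by (simp add: m_def rest ts)
  have m1: "m \<le> length ys" using ly by simp
  have t1: "take m rest = take m ys" using m1 by (simp add: rest)
  have t2: "take (i - 1) (drop m rest) = drop m ys"
    using ly m1 by (simp add: rest)
  have "take m ys @ drop m ys = ys" by simp
  then show ?thesis using t1 t2 lr
    by (simp add: ts rest nth_append)
qed

lemma node_key:
  assumes n3: "3 \<le> length ts" and i1: "1 \<le> i" and i2: "i \<le> length ts - 2"
  shows "eqv (mmuG (starE Mfin) subL [] i (map (\<lambda>s. [(1::'k::field,[s])]) ts)) [(1,[FNode i ts])]"
proof (cases "i = 1")
  case True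
  let ?A = "take (length ts - 2) (drop 1 ts)"
  have A1: "1 \<le> length ?A" using n3 by simp
  have e: "mmuG (starE Mfin) subL [] i (map (\<lambda>s. [(1::'k,[s])]) ts)
     = asG (starE Mfin) subL [(1,[ts ! 0])] [(1, ?A)] [(1,[ts ! (length ts - 1)])]"
  proof -
    have o: "omG (starE Mfin) [] (map (\<lambda>s. [(1::'k,[s])]) ?A) = [(1, ?A)]"
      using A1 by (intro omG_single) auto
    have h: "map (\<lambda>s. [(1::'k,[s])]) ts ! 0 = [(1, [ts ! 0])]" using n3 by (subst nth_map) auto
    show ?thesis using True n3 o h by (simp add: mmuG_def Let_def take_map drop_map)
  qed
  show ?thesis unfolding e using key1[OF A1, of "ts ! 0" "ts ! (length ts - 1)"] split1[of ts] n3 True by simp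
next
  case False
  let ?A = "take (length ts - i - 1) (drop 1 ts)"
  let ?B = "take (i - 1) (drop (length ts - i) ts)"
  have A1: "1 \<le> length ?A" and B1: "1 \<le> length ?B" and lB: "Suc (length ?B) = i"
    using n3 i1 i2 False by auto
  have e: "mmuG (starE Mfin) subL [] i (map (\<lambda>s. [(1::'k,[s])]) ts)
     = Dfun Mfin (ts ! 0) ?A ?B (ts ! (length ts - 1))"
  proof -
    have o1: "omG (starE Mfin) [] (map (\<lambda>s. [(1::'k,[s])]) ?A) = [(1, ?A)]"
      using A1 by (intro omG_single) auto
    have o2: "omG (starE Mfin) [] (map (\<lambda>s. [(1::'k,[s])]) ?B) = [(1, ?B)]"
      using B1 by (intro omG_single) auto
    have h: "map (\<lambda>s. [(1::'k,[s])]) ts ! 0 = [(1, [ts ! 0])]" using n3 by (subst nth_map) auto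
    show ?thesis using False n3 o1 o2 h by (simp add: mmuG_def Let_def take_map drop_map Dfun_def)
  qed
  show ?thesis unfolding e using key2[OF A1 B1, of "ts ! 0" "ts ! (length ts - 1)"] split2[of i ts] n3 i1 i2 False lB
    by simp
qed



primrec Psi :: "'x mtree \<Rightarrow> ('k::field \<times> 'x ftree list) list" where
  "Psi (MLeaf x) = [(1, [FLeaf x])]"
| "Psi (MNode a b) = starE Mfin (Psi a) (Psi b)"

definition Rel :: "('x, 'k::field) mag \<Rightarrow> ('k \<times> 'x ftree list) list \<Rightarrow> bool" where
  "Rel f Y = (\<exists>X. f = evalM X \<and> eqv (lin Psi X) Y)"

lemma rel_mul:
  assumes "Rel a Y1" "Rel b Y2"
  shows "Rel (mmul a b) (starE Mfin Y1 Y2)"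
proof -
  obtain X1 X2 where h1: "a = evalM X1" "eqv (lin Psi X1) Y1" and h2: "b = evalM X2" "eqv (lin Psi X2) Y2"
    using assms unfolding Rel_def by blast
  have e1: "\<And>F. lsum Y1 F = lsum X1 (\<lambda>a. lsum (Psi a) F)" using h1(2) by (simp add: eqv_def)
  have e2: "\<And>F. lsum Y2 F = lsum X2 (\<lambda>a. lsum (Psi a) F)" using h2(2) by (simp add: eqv_def)
  have "eqv (lin Psi (mmulL X1 X2)) (starE Mfin Y1 Y2)"
    unfolding eqv_def
  proof
    fix G :: "'a ftree list \<Rightarrow> 'b"
    define S where "S = (\<lambda>u v. lsum (star Mfin u v) G)"
    have "lsum (lin Psi (mmulL X1 X2)) G = lsum X1 (\<lambda>a. lsum X2 (\<lambda>b. lsum (Psi a) (\<lambda>u. lsum (Psi b) (\<lambda>v. S u v))))"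
      by (simp add: mmulL_def lsum_starE S_def)
    also have "\<dots> = lsum X1 (\<lambda>a. lsum (Psi a) (\<lambda>u. lsum X2 (\<lambda>b. lsum (Psi b) (\<lambda>v. S u v))))"
      by (intro lsum_cong) (rule lsum_swap)
    also have "\<dots> = lsum (starE Mfin Y1 Y2) G"
      by (simp add: lsum_starE e1 e2 S_def)
    finally show "lsum (lin Psi (mmulL X1 X2)) G = lsum (starE Mfin Y1 Y2) G" .
  qed
  then show ?thesis unfolding Rel_def by (intro exI[of _ "mmulL X1 X2"]) (simp add: h1(1) h2(1) evalM_mmulL)
qed

lemma rel_sub:
  assumes "Rel a Y1" "Rel b Y2"
  shows "Rel (msub a b) (subL Y1 Y2)"
proof -
  obtain X1 X2 where h1: "a = evalM X1" "eqv (lin Psi X1) Y1" and h2: "b = evalM X2" "eqv (lin Psi X2) Y2"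
    using assms unfolding Rel_def by blast
  have "eqv (lin Psi (subL X1 X2)) (subL Y1 Y2)"
    using h1(2) h2(2) by (simp add: eqv_def subL_def)
  then show ?thesis unfolding Rel_def by (intro exI[of _ "subL X1 X2"]) (simp add: h1(1) h2(1) evalM_subL)
qed

lemma rel_zero: "Rel (\<lambda>_. 0) []"
  unfolding Rel_def
proof (intro exI conjI)
  show "(\<lambda>_. 0) = evalM []" by (simp add: evalM_Nil)
  show "eqv (lin Psi []) []" by (simp add: lin_def)
qed

lemma rel_eqv: "Rel f Y \<Longrightarrow> eqv Y Y' \<Longrightarrow> Rel f Y'"
  unfolding Rel_def using eqv_trans by blast

lemma main_rel: "fvalid t \<Longrightarrow> Rel (feval t :: ('x, 'k::field) mag) [(1::'k, [t])]"
proof (induction t)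
  case (FLeaf x)
  have "mgen x = evalM [(1::'k, MLeaf x)]"
    by (rule ext) (simp add: mgen_def evalM_def coef_def)
  then show ?case unfolding Rel_def by (auto simp: eqv_def)
next
  case (FNode i ts)
  have v: "3 \<le> length ts" "1 \<le> i" "i \<le> length ts - 2" "\<And>t. t \<in> set ts \<Longrightarrow> fvalid t"
    using FNode.prems by auto
  have l: "list_all2 Rel (map feval ts :: ('x, 'k) mag list) (map (\<lambda>s. [(1::'k, [s])]) ts)"
    using FNode.IH v(4) by (auto simp: list_all2_map1 list_all2_map2 intro!: list.rel_refl_strong)
  have "Rel (mmuG mmul msub (\<lambda>_. 0) i (map feval ts)) (mmuG (starE Mfin) subL [] i (map (\<lambda>s. [(1::'k, [s])]) ts))"
    apply (rule mmuG_rel[where R=Rel])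
        apply (erule (1) rel_mul)
       apply (erule (1) rel_sub)
      apply (rule rel_zero)
     apply (rule l)
    using v(1) by simp
  then have "Rel (feval (FNode i ts) :: ('x, 'k) mag) (mmuG (starE Mfin) subL [] i (map (\<lambda>s. [(1::'k, [s])]) ts))"
    by (simp add: mmu_mmuG)
  then show ?case by (rule rel_eqv) (rule node_key[OF v(1-3)])
qed



definition Xf :: "'x ftree \<Rightarrow> ('k::field \<times> 'x mtree) list" where
  "Xf t = (SOME X. feval t = evalM X \<and> eqv (lin Psi X) [(1::'k, [t])])"

lemma Xf_prop: "fvalid t \<Longrightarrow> feval t = evalM (Xf t :: ('k::field \<times> 'x mtree) list) \<and> eqv (lin Psi (Xf t)) [(1::'k, [t])]"
  using main_rel[of t] unfolding Rel_def Xf_def by (rule someI_ex)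

lemma coef_extract:
  fixes c :: "'x ftree \<Rightarrow> 'k::field"
  assumes c: "c \<in> magfine_elems" and S: "finite S" "{t. c t \<noteq> 0} \<subseteq> S" "\<And>t. t \<in> S \<Longrightarrow> fvalid t"
    and U: "finite U" "\<And>t. t \<in> S \<Longrightarrow> snd ` set (Xf t :: ('k \<times> 'x mtree) list) \<subseteq> U"
  shows "c t0 = (\<Sum>T\<in>U. magfine_to_mag c T * lsum (Psi T) (\<lambda>w. if w = [t0] then (1::'k) else 0))"
proof -
  define H where "H = (\<lambda>T. lsum (Psi T) (\<lambda>w. if w = [t0] then (1::'k) else 0))"
  have fin: "finite {t. c t \<noteq> 0}" using c by (simp add: magfine_elems_def)
  have one: "\<And>t. t \<in> S \<Longrightarrow> (if t = t0 then 1 else 0) = (\<Sum>T\<in>U. feval t T * H T)"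
  proof -
    fix t assume t: "t \<in> S"
    have p: "feval t = evalM (Xf t :: ('k \<times> 'x mtree) list)" "eqv (lin Psi (Xf t :: ('k \<times> 'x mtree) list)) [(1::'k, [t])]"
      using Xf_prop[OF S(3)[OF t]] by auto
    have "(if t = t0 then 1 else 0) = lsum [(1::'k, [t])] (\<lambda>w. if w = [t0] then (1::'k) else 0)"
      by simp
    also have "\<dots> = lsum (lin Psi (Xf t :: ('k \<times> 'x mtree) list)) (\<lambda>w. if w = [t0] then (1::'k) else 0)"
      using p(2) by (simp add: eqv_def)
    also have "\<dots> = lsum (Xf t :: ('k \<times> 'x mtree) list) H" by (simp add: H_def)
    also have "\<dots> = (\<Sum>T\<in>U. coef (Xf t :: ('k \<times> 'x mtree) list) T * H T)"
      by (rule lsum_group[OF U(1) U(2)[OF t]])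
    also have "\<dots> = (\<Sum>T\<in>U. feval t T * H T)"
      using p(1) by (simp add: evalM_def)
    finally show "(if t = t0 then 1 else 0) = (\<Sum>T\<in>U. feval t T * H T)" .
  qed
  have "c t0 = (\<Sum>t\<in>S. c t * (if t = t0 then 1 else 0))"
  proof (cases "t0 \<in> S")
    case True then show ?thesis by (simp add: S(1) if_distrib[where f="\<lambda>x. c _ * x"] cong: if_cong)
  next
    case False then have "c t0 = 0" using S(2) by blast
    then show ?thesis using False by (auto intro!: sum.neutral)
  qed
  also have "\<dots> = (\<Sum>t\<in>S. c t * (\<Sum>T\<in>U. feval t T * H T))"
    by (intro sum.cong refl) (simp add: one)
  also have "\<dots> = (\<Sum>T\<in>U. (\<Sum>t\<in>S. c t * feval t T) * H T)"
    by (simp add: sum_distrib_left sum_distrib_right mult.assoc sum.swap[of _ S])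
  also have "\<dots> = (\<Sum>T\<in>U. magfine_to_mag c T * H T)"
  proof (intro sum.cong refl arg_cong[where f="\<lambda>x. x * H _"])
    fix T
    show "(\<Sum>t\<in>S. c t * feval t T) = magfine_to_mag c T"
      unfolding magfine_to_mag_def using S(1,2)
      by (intro sum.mono_neutral_right) auto
  qed
  finally show ?thesis by (simp add: H_def)
qed

theorem proposition2p9:
  shows "inj_on (magfine_to_mag :: ('x ftree \<Rightarrow> 'k::field) \<Rightarrow> ('x, 'k) mag) magfine_elems"
proof (rule inj_onI)
  fix c1 c2 :: "'x ftree \<Rightarrow> 'k"
  assume c1: "c1 \<in> magfine_elems" and c2: "c2 \<in> magfine_elems" and eq: "magfine_to_mag c1 = magfine_to_mag c2"
  define S where "S = {t. c1 t \<noteq> 0} \<union> {t. c2 t \<noteq> 0}"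
  have fS: "finite S" using c1 c2 by (simp add: S_def magfine_elems_def)
  have vS: "\<And>t. t \<in> S \<Longrightarrow> fvalid t" using c1 c2 by (auto simp: S_def magfine_elems_def)
  define U where "U = (\<Union>t\<in>S. snd ` set (Xf t :: ('k \<times> 'x mtree) list))"
  have fU: "finite U" using fS by (simp add: U_def)
  have sU: "\<And>t. t \<in> S \<Longrightarrow> snd ` set (Xf t :: ('k \<times> 'x mtree) list) \<subseteq> U" by (auto simp: U_def)
  show "c1 = c2"
  proof (rule ext)
    fix t0
    show "c1 t0 = c2 t0"
      using coef_extract[OF c1 fS _ vS fU sU, of t0] coef_extract[OF c2 fS _ vS fU sU, of t0] eq
      by (simp add: S_def)
  qed
qed


end
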